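(* Let $X$ be a super $X$-set parameter, let $G$ be a graph, and let $R\subseteq V(G)$. Define $\nu_R$ on the $X$-sets of $G$ by $\nu_R(S)=S\ominus R$. Then $\nu_R$ is a graph automorphism of $\mathfrak{X}(G)$ if and only if $R$ is $X$-irrelevant.
   Context: All graphs are finite, simple, undirected, with nonempty vertex set. A super $X$-set parameter $X$ assigns to each graph $G$ a family of subsets of $V(G)$, called the $X$-sets of $G$, such that: every graph isomorphism maps $X$-sets to $X$-sets; every graph has at least one $X$-set; and (Superset) if $S$ is an $X$-set of $G$ and $S\subseteq S'\subseteq V(G)$, then $S'$ is an $X$-set of $G$. The $X$-TAR graph $\mathfrak{X}(G)$ has as vertices the $X$-sets of $G$, with $S_1S_2$ an edge iff $|S_1\ominus S_2|=1$; $\ominus$ is symmetric difference. A vertex $v$ is $X$-irrelevant if $v$ belongs to no minimal (w.r.t. inclusion) $X$-set of $G$; a set $R$ is $X$-irrelevant if each of its vertices is. *)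

theory Defs
  imports Main
begin

definition is_graph :: "'a set \<Rightarrow> 'a set set \<Rightarrow> bool" where
  "is_graph V E \<longleftrightarrow> finite V \<and> V \<noteq> {} \<and>
     (\<forall>e\<in>E. \<exists>u v. e = {u, v} \<and> u \<in> V \<and> v \<in> V \<and> u \<noteq> v)"

definition graph_iso :: "('a \<Rightarrow> 'b) \<Rightarrow> 'a set \<Rightarrow> 'a set set \<Rightarrow> 'b set \<Rightarrow> 'b set set \<Rightarrow> bool" where
  "graph_iso f V1 E1 V2 E2 \<longleftrightarrow> bij_betw f V1 V2 \<and>
     (\<forall>u\<in>V1. \<forall>v\<in>V1. {u, v} \<in> E1 \<longleftrightarrow> {f u, f v} \<in> E2)"

definition graph_automorphism :: "('a \<Rightarrow> 'a) \<Rightarrow> 'a set \<Rightarrow> 'a set set \<Rightarrow> bool" where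
  "graph_automorphism f V E \<longleftrightarrow> graph_iso f V E V E"

definition symdiff :: "'a set \<Rightarrow> 'a set \<Rightarrow> 'a set" where
  "symdiff A B = (A - B) \<union> (B - A)"

text \<open>A super X-set parameter on graphs with vertices of type 'a:
  X V E is the family of X-sets of the graph (V,E).\<close>
definition super_X_param :: "('a set \<Rightarrow> 'a set set \<Rightarrow> 'a set set) \<Rightarrow> bool" where
  "super_X_param X \<longleftrightarrow>
     (\<forall>V E. is_graph V E \<longrightarrow> X V E \<subseteq> Pow V \<and> X V E \<noteq> {}) \<and>
     (\<forall>V E S S'. is_graph V E \<longrightarrow> S \<in> X V E \<longrightarrow> S \<subseteq> S' \<longrightarrow> S' \<subseteq> V \<longrightarrow> S' \<in> X V E) \<and>
     (\<forall>V1 E1 V2 E2 f S. is_graph V1 E1 \<longrightarrow> is_graph V2 E2 \<longrightarrow> graph_iso f V1 E1 V2 E2 \<longrightarrow>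
        S \<in> X V1 E1 \<longrightarrow> f ` S \<in> X V2 E2)"

definition tar_vertices :: "('a set \<Rightarrow> 'a set set \<Rightarrow> 'a set set) \<Rightarrow> 'a set \<Rightarrow> 'a set set \<Rightarrow> 'a set set" where
  "tar_vertices X V E = X V E"

definition tar_edges :: "('a set \<Rightarrow> 'a set set \<Rightarrow> 'a set set) \<Rightarrow> 'a set \<Rightarrow> 'a set set \<Rightarrow> 'a set set set" where
  "tar_edges X V E = {{S1, S2} | S1 S2. S1 \<in> X V E \<and> S2 \<in> X V E \<and> card (symdiff S1 S2) = 1}"

definition minimal_X_set :: "('a set \<Rightarrow> 'a set set \<Rightarrow> 'a set set) \<Rightarrow> 'a set \<Rightarrow> 'a set set \<Rightarrow> 'a set \<Rightarrow> bool" where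
  "minimal_X_set X V E S \<longleftrightarrow> S \<in> X V E \<and> (\<forall>T\<in>X V E. T \<subseteq> S \<longrightarrow> T = S)"

definition X_irrelevant_vertex :: "('a set \<Rightarrow> 'a set set \<Rightarrow> 'a set set) \<Rightarrow> 'a set \<Rightarrow> 'a set set \<Rightarrow> 'a \<Rightarrow> bool" where
  "X_irrelevant_vertex X V E v \<longleftrightarrow> (\<forall>S. minimal_X_set X V E S \<longrightarrow> v \<notin> S)"

definition X_irrelevant_set :: "('a set \<Rightarrow> 'a set set \<Rightarrow> 'a set set) \<Rightarrow> 'a set \<Rightarrow> 'a set set \<Rightarrow> 'a set \<Rightarrow> bool" where
  "X_irrelevant_set X V E R \<longleftrightarrow> (\<forall>v\<in>R. X_irrelevant_vertex X V E v)"

end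

theory Submission
  imports Defs
begin

lemma symdiff_twice: "symdiff (symdiff S R) R = S"
  by (auto simp: symdiff_def)

lemma symdiff_cancel: "symdiff (symdiff S1 R) (symdiff S2 R) = symdiff S1 S2"
  by (auto simp: symdiff_def)

lemma symdiff_comm: "symdiff A B = symdiff B A"
  by (auto simp: symdiff_def)

lemma tar_edge_iff:
  assumes "u \<in> X V E" "v \<in> X V E"
  shows "{u, v} \<in> tar_edges X V E \<longleftrightarrow> card (symdiff u v) = 1"
proof
  assume "{u, v} \<in> tar_edges X V E"
  then obtain S1 S2 where h: "{u,v} = {S1,S2}" "card (symdiff S1 S2) = 1"
    by (auto simp: tar_edges_def)
  from h(1) have "symdiff u v = symdiff S1 S2"
    by (auto simp: doubleton_eq_iff symdiff_comm)
  with h(2) show "card (symdiff u v) = 1" by simp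
next
  assume "card (symdiff u v) = 1"
  with assms show "{u, v} \<in> tar_edges X V E" by (auto simp: tar_edges_def)
qed

lemma sup_sub: "super_X_param X \<Longrightarrow> is_graph V E \<Longrightarrow> S \<in> X V E \<Longrightarrow> S \<subseteq> V"
  unfolding super_X_param_def by (meson PowD subsetD)

lemma sup_up: "super_X_param X \<Longrightarrow> is_graph V E \<Longrightarrow> S \<in> X V E \<Longrightarrow> S \<subseteq> S' \<Longrightarrow> S' \<subseteq> V \<Longrightarrow> S' \<in> X V E"
  unfolding super_X_param_def by metis

lemma exists_minimal:
  assumes X: "super_X_param X" and G: "is_graph V E" and S: "S \<in> X V E"
  shows "\<exists>M. minimal_X_set X V E M \<and> M \<subseteq> S"
proof -
  define P where "P = (\<lambda>n. \<exists>T. T \<in> X V E \<and> T \<subseteq> S \<and> card T = n)"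
  define n where "n = (LEAST n. P n)"
  have Pc: "P (card S)" using S by (auto simp: P_def)
  have n: "P n" unfolding n_def using Pc by (rule LeastI)
  have least: "\<And>m. P m \<Longrightarrow> n \<le> m" unfolding n_def by (rule Least_le)
  from n have "\<exists>T. T \<in> X V E \<and> T \<subseteq> S \<and> card T = n" by (simp add: P_def)
  then obtain M where M: "M \<in> X V E" "M \<subseteq> S" "card M = n" by blast
  have fin: "finite M"
    using sup_sub[OF X G M(1)] G unfolding is_graph_def using finite_subset by blast
  have "minimal_X_set X V E M"
    unfolding minimal_X_set_def
  proof (intro conjI ballI impI)
    fix T assume T: "T \<in> X V E" "T \<subseteq> M"
    with M have "n \<le> card T" using least[of "card T"] by (auto simp: P_def)
    thus "T = M" using T M fin by (metis card_seteq)
  qed (fact M(1))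
  with M show ?thesis by blast
qed

theorem theorem2p23:
  fixes X :: "'a set \<Rightarrow> 'a set set \<Rightarrow> 'a set set"
    and V :: "'a set" and E :: "'a set set" and R :: "'a set"
  assumes "super_X_param X"
    and "is_graph V E"
    and "R \<subseteq> V"
  shows "graph_automorphism (\<lambda>S. symdiff S R) (tar_vertices X V E) (tar_edges X V E)
         \<longleftrightarrow> X_irrelevant_set X V E R"
proof
  assume A: "graph_automorphism (\<lambda>S. symdiff S R) (tar_vertices X V E) (tar_edges X V E)"
  hence B: "bij_betw (\<lambda>S. symdiff S R) (X V E) (X V E)"
    by (simp add: graph_automorphism_def graph_iso_def tar_vertices_def)
  show "X_irrelevant_set X V E R"
    unfolding X_irrelevant_set_def X_irrelevant_vertex_def
  proof (intro ballI allI impI notI)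
    fix v M assume v: "v \<in> R" and M: "minimal_X_set X V E M" and vM: "v \<in> M"
    have MX: "M \<in> X V E" and Mmin: "\<forall>T\<in>X V E. T \<subseteq> M \<longrightarrow> T = M"
      using M by (auto simp: minimal_X_set_def)
    have MV: "M \<subseteq> V" using sup_sub[OF assms(1,2) MX] .
    have "M \<union> R \<in> X V E"
      by (rule sup_up[OF assms(1,2) MX]) (use MV assms(3) in auto)
    hence "symdiff (M \<union> R) R \<in> X V E" using B by (auto simp: bij_betw_def)
    moreover have "symdiff (M \<union> R) R = M - R" by (auto simp: symdiff_def)
    ultimately have "M - R = M" using Mmin by blast
    with v vM show False by blast
  qed
next
  assume I: "X_irrelevant_set X V E R"
  have maps: "symdiff S R \<in> X V E" if S: "S \<in> X V E" for S
  proof -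
    obtain M where M: "minimal_X_set X V E M" "M \<subseteq> S"
      using exists_minimal[OF assms(1,2) S] by blast
    have "M \<inter> R = {}" using I M(1) by (auto simp: X_irrelevant_set_def X_irrelevant_vertex_def)
    hence sub: "M \<subseteq> symdiff S R" using M(2) by (auto simp: symdiff_def)
    have SV: "S \<subseteq> V" using sup_sub[OF assms(1,2) S] .
    have "symdiff S R \<subseteq> V" using SV assms(3) by (auto simp: symdiff_def)
    moreover have "M \<in> X V E" using M(1) by (simp add: minimal_X_set_def)
    ultimately show ?thesis using sup_up[OF assms(1,2)] sub by blast
  qed
  have bij: "bij_betw (\<lambda>S. symdiff S R) (X V E) (X V E)"
    by (rule bij_betw_byWitness[where f'="\<lambda>S. symdiff S R"]) (auto simp: symdiff_twice maps)
  show "graph_automorphism (\<lambda>S. symdiff S R) (tar_vertices X V E) (tar_edges X V E)"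
    unfolding graph_automorphism_def graph_iso_def tar_vertices_def
    using bij maps by (simp add: tar_edge_iff symdiff_cancel)
qed

end
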